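(* Let $\beta>0$ be a constant and let $x_{1:n}\in\mathcal X^n$ ($n\ge 1$) be any sequence, with used alphabet $\mathcal A$ of size $m$ and counts $n_j$. Then the redundancy of $S^\beta$ satisfies the exact identity $$R^\beta_S(x_{1:n}) = \mathrm{CL}_w(\mathcal A) - m\ln\beta + \sum_{j\in\mathcal A}\ln\frac{n_j^{n_j}}{\Gamma(n_j)} + \ln\frac{\Gamma(n+\beta)}{n^n\,\Gamma(\beta)},$$ and the upper bound $R^\beta_S(x_{1:n})\le \overline R^\beta_S$, where $$\overline R^\beta_S := \mathrm{CL}_w(\mathcal A) - m\ln\beta + \sum_{j\in\mathcal A}\tfrac12\ln\frac{n_j}{2\pi} + n\ln\Big(1+\frac{\beta}{n}\Big) + \Big(\beta-\tfrac12\Big)\ln\Big(\frac{n}{\beta}+1\Big) + \big(1-\ln\sqrt{2\pi}\big).$$ If moreover $\beta\ge 1$, then also $R^\beta_S(x_{1:n})\ge \overline R^\beta_S - (1-\ln\sqrt{2\pi})(m+2)$.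
   Context: Let $\mathcal X$ be a finite base alphabet with $D=|\mathcal X|$. For a sequence $x_{1:n}=(x_1,\dots,x_n)\in\mathcal X^n$, let $n_i$ be the number of occurrences of $i$ in $x_{1:n}$, $\mathcal A=\{x_1,\dots,x_n\}$ the set of used symbols and $m=|\mathcal A|$. For $0\le t\le n$ let $\mathcal A_t=\{x_1,\dots,x_t\}$ ($\mathcal A_0=\emptyset$), $m_t=|\mathcal A_t|$, and $n^t_i$ the number of occurrences of $i$ in $x_{1:t}$. New-symbol weights: for each $t$ and each $i\in\mathcal X\setminus\mathcal A_t$ a number $w^t_i>0$ with $\sum_{k\in\mathcal X\setminus\mathcal A_t}w^t_k\le 1$. For a constant $\beta>0$ the model $S^\beta$ is defined by $S^\beta(x_{t+1}=i\mid x_{1:t})=n^t_i/(t+\beta)$ if $n^t_i>0$ and $=\beta w^t_i/(t+\beta)$ if $n^t_i=0$ ($t=0,\dots,n-1$), and $S^\beta(x_{1:n})=\prod_{t=0}^{n-1}S^\beta(x_{t+1}\mid x_{1:t})$. Define $\mathrm{CL}_w(\mathcal A):=\sum_{t\in\{0,\dots,n-1\}:\,x_{t+1}\notin\mathcal A_t}\ln(1/w^t_{x_{t+1}})$. The redundancy of a (sub)probability $Q$ on sequences relative to the i.i.d. class is $R_Q(x_{1:n}) := \ln\frac{\max_{\theta}\prod_{t=1}^n\theta_{x_t}}{Q(x_{1:n})} = \ln\frac{n^{-n}\prod_{j\in\mathcal A}n_j^{n_j}}{Q(x_{1:n})}$, the max over probability vectors $\theta$ on $\mathcal X$; $R^\beta_S:=R_{S^\beta}$.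 All logarithms are natural. *)

theory Defs
  imports "HOL-Analysis.Analysis"
begin

text \<open>Base alphabet = the finite type 'a. A sequence x_{1:n} is a list xs with length n;
  x_{t+1} = xs ! t. The weights w t i stand for w^t_i.\<close>

definition cnt :: "'a list \<Rightarrow> 'a \<Rightarrow> nat" where
  "cnt xs i = count_list xs i"

definition S_cond :: "real \<Rightarrow> (nat \<Rightarrow> 'a \<Rightarrow> real) \<Rightarrow> 'a list \<Rightarrow> nat \<Rightarrow> 'a \<Rightarrow> real" where
  "S_cond \<beta> w xs t i =
     (if cnt (take t xs) i > 0 then real (cnt (take t xs) i) / (real t + \<beta>)
      else \<beta> * w t i / (real t + \<beta>))"

definition S_prob :: "real \<Rightarrow> (nat \<Rightarrow> 'a \<Rightarrow> real) \<Rightarrow> 'a list \<Rightarrow> real" where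
  "S_prob \<beta> w xs = (\<Prod>t<length xs. S_cond \<beta> w xs t (xs ! t))"

definition CL :: "(nat \<Rightarrow> 'a \<Rightarrow> real) \<Rightarrow> 'a list \<Rightarrow> real" where
  "CL w xs = (\<Sum>t\<in>{t. t < length xs \<and> xs ! t \<notin> set (take t xs)}. ln (1 / w t (xs ! t)))"

definition valid_weights :: "(nat \<Rightarrow> 'a::finite \<Rightarrow> real) \<Rightarrow> nat \<Rightarrow> 'a list \<Rightarrow> bool" where
  "valid_weights w n xs \<longleftrightarrow>
     (\<forall>t\<le>n. (\<forall>i. i \<notin> set (take t xs) \<longrightarrow> w t i > 0) \<and>
            (\<Sum>k\<in>UNIV - set (take t xs). w t k) \<le> 1)"

definition prob_vecs :: "('a::finite \<Rightarrow> real) set" where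
  "prob_vecs = {\<theta>. (\<forall>i. \<theta> i \<ge> 0) \<and> (\<Sum>i\<in>UNIV. \<theta> i) = 1}"

definition max_lik :: "'a::finite list \<Rightarrow> real" where
  "max_lik xs = (SUP \<theta>\<in>prob_vecs. \<Prod>t<length xs. \<theta> (xs ! t))"

definition redundancy :: "('a::finite list \<Rightarrow> real) \<Rightarrow> 'a list \<Rightarrow> real" where
  "redundancy Q xs = ln (max_lik xs / Q xs)"

end

theory Submission
  imports Defs "HOL-Real_Asymp.Real_Asymp"
begin



lemma incr_from_deriv:
  fixes f f' :: "real \<Rightarrow> real"
  assumes "a \<le> b" "\<And>x. a \<le> x \<Longrightarrow> x \<le> b \<Longrightarrow> (f has_real_derivative f' x) (at x)"
    "\<And>x. a < x \<Longrightarrow> x < b \<Longrightarrow> f' x \<ge> 0"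
  shows "f a \<le> f b"
proof (rule DERIV_nonneg_imp_increasing_open[OF assms(1)])
  show "\<And>x. a < x \<Longrightarrow> x < b \<Longrightarrow> \<exists>y. DERIV f x :> y \<and> 0 \<le> y"
  proof -
    fix x assume "a < x" "x < b"
    thus "\<exists>y. DERIV f x :> y \<and> 0 \<le> y" using assms by (intro exI[of _ "f' x"]) auto
  qed
  show "continuous_on {a..b} f"
    by (rule continuous_at_imp_continuous_on) (use assms DERIV_isCont in force)
qed

lemma ln_lower:
  fixes u :: real assumes "u \<ge> 0" shows "2*u \<le> (2+u) * ln (1+u)"
proof -
  let ?f = "\<lambda>x::real. ln (1+x) - 2*x/(2+x)"
  have "?f 0 \<le> ?f u"
  proof (rule incr_from_deriv[where f = ?f and f' = "\<lambda>x. 1/(1+x) - 4/(2+x)^2"])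
    fix x :: real assume "0 \<le> x"
    hence "1+x > 0" "2+x > 0" by auto
    then show "(?f has_real_derivative 1/(1+x) - 4/(2+x)^2) (at x)"
      by (auto intro!: derivative_eq_intros simp: field_simps power2_eq_square)
  next
    fix x :: real assume x: "0 < x"
    have "4*(1+x) \<le> (2+x)^2" by (simp add: power2_eq_square algebra_simps)
    hence "4/(2+x)^2 \<le> 1/(1+x)" using x by (simp add: field_simps)
    thus "0 \<le> 1/(1+x) - 4/(2+x)^2" by simp
  qed (use assms in auto)
  hence "2*u/(2+u) \<le> ln (1+u)" by simp
  thus ?thesis using assms by (simp add: field_simps)
qed

lemma ln_upper:
  fixes u :: real assumes "u \<ge> 0" shows "2*(1+u) * ln (1+u) \<le> u*(u+2)"
proof -
  let ?f = "\<lambda>x::real. x*(x+2) - 2*(1+x) * ln (1+x)"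
  have "?f 0 \<le> ?f u"
  proof (rule incr_from_deriv[where f = ?f and f' = "\<lambda>x. 2*x - 2*ln (1+x)"])
    fix x :: real assume "0 \<le> x"
    hence "1+x > 0" by auto
    moreover have "2/(1+x) + x*2/(1+x) = 2"
    proof -
      have "2/(1+x) + x*2/(1+x) = (2*(1+x))/(1+x)" by (simp add: add_divide_distrib[symmetric] algebra_simps)
      also have "\<dots> = 2" using \<open>1+x>0\<close> by (intro nonzero_mult_div_cancel_right) simp
      finally show ?thesis .
    qed
    ultimately show "(?f has_real_derivative 2*x - 2*ln (1+x)) (at x)"
      by (auto intro!: derivative_eq_intros simp: algebra_simps)
  next
    fix x :: real assume x: "0 < x"
    thus "0 \<le> 2*x - 2*ln (1+x)" using ln_add_one_self_le_self[of x] by simp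
  qed (use assms in auto)
  thus ?thesis by simp
qed

definition hh :: "real \<Rightarrow> real" where "hh y = (y + 1/2) * (ln (y+1) - ln y) - 1"

lemma ln_ratio: "(y::real) > 0 \<Longrightarrow> ln (y+1) - ln y = ln (1 + 1/y)"
proof -
  assume y: "y > 0"
  have "1 + 1/y = (y+1)/y" using y by (simp add: field_simps)
  thus ?thesis using y by (simp add: ln_div)
qed

lemma Lbounds:
  fixes y :: real
  assumes y: "y > 0"
  shows "2 \<le> (2*y+1) * (ln (y+1) - ln y)" "2*y*(y+1) * (ln (y+1) - ln y) \<le> 2*y+1"
proof -
  define L where "L = ln (y+1) - ln y"
  have L: "L = ln (1+1/y)" using ln_ratio[OF y] L_def by simp
  have a: "2*(1/y) \<le> (2+1/y) * L" unfolding L by (rule ln_lower) (use y in auto)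
  have "y * (2*(1/y)) \<le> y * ((2+1/y) * L)" using a y by (intro mult_left_mono) auto
  moreover have "y*(2*(1/y)) = 2" "y*((2+1/y)*L) = (2*y+1)*L" using y by (simp_all add: field_simps)
  ultimately show "2 \<le> (2*y+1) * (ln (y+1) - ln y)" unfolding L_def[symmetric] by simp
  have b: "2*(1+1/y) * L \<le> (1/y)*(1/y+2)" unfolding L by (rule ln_upper) (use y in auto)
  have i: "y^2 * (2*(1+1/y) * L) \<le> y^2 * ((1/y)*(1/y+2))" using b y by (intro mult_left_mono) auto
  have e1: "y^2 * (2*(1+1/y) * L) = 2*y*(y+1)*L" using y by (simp add: field_simps power2_eq_square)
  have e2: "y^2 * ((1/y)*(1/y+2)) = 2*y+1"
    using y by (simp add: field_simps power2_eq_square)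
  show "2*y*(y+1) * (ln (y+1) - ln y) \<le> 2*y+1" using i unfolding L_def[symmetric] e1 e2 .
qed

lemma hh_nonneg: "y > 0 \<Longrightarrow> hh y \<ge> 0"
  using Lbounds(1)[of y] by (simp add: hh_def algebra_simps)

lemma hh_upper: "y > 0 \<Longrightarrow> hh y \<le> 1/(4*y) - 1/(4*(y+1))"
proof -
  assume y: "y > 0"
  define L where "L = ln (y+1) - ln y"
  have A: "2*y*(y+1) * L \<le> 2*y+1" using Lbounds(2)[OF y] L_def by simp
  have e: "1/(4*y) - 1/(4*(y+1)) = 1/(4*(y*(y+1)))" using y by (simp add: field_simps)
  have p: "4*(y*(y+1)) > 0" using y by simp
  have "((y+1/2)*L - 1) * (4*(y*(y+1))) = (2*y+1) * (2*y*(y+1)*L) - 4*(y*(y+1))"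
    by (simp add: algebra_simps)
  also have "\<dots> \<le> (2*y+1) * (2*y+1) - 4*(y*(y+1))"
    using A y by (intro diff_right_mono mult_left_mono) auto
  also have "\<dots> = 1" by (simp add: algebra_simps)
  finally have "((y+1/2)*L - 1) \<le> 1/(4*(y*(y+1)))" using p by (simp add: pos_le_divide_eq)
  thus ?thesis unfolding e hh_def L_def .
qed

lemma hh_mono: "0 < x \<Longrightarrow> x \<le> y \<Longrightarrow> hh y \<le> hh x"
proof -
  assume x: "0 < x" and xy: "x \<le> y"
  let ?f = "\<lambda>z. - hh z"
  have "?f x \<le> ?f y"
  proof (rule incr_from_deriv[OF xy, where f = ?f and f' = "\<lambda>z. - ((ln (z+1) - ln z) + (z+1/2)*(1/(z+1) - 1/z))"])
    fix z :: real assume "x \<le> z" "z \<le> y"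
    hence z: "z > 0" using x by auto
    then show "(?f has_real_derivative - ((ln (z+1) - ln z) + (z+1/2)*(1/(z+1) - 1/z))) (at z)"
      unfolding hh_def by (auto intro!: derivative_eq_intros simp: divide_simps)
  next
    fix z :: real assume "x < z" "z < y"
    hence z: "z > 0" using x by auto
    define L where "L = ln (z+1) - ln z"
    have A: "L * (2*z*(z+1)) \<le> 2*z+1" using Lbounds(2)[OF z] L_def by (simp add: mult.commute)
    have p: "2*z*(z+1) > 0" using z by simp
    have "L \<le> (2*z+1) / (2*z*(z+1))" using A p by (simp add: pos_le_divide_eq)
    also have "(2*z+1) / (2*z*(z+1)) = - ((z+1/2)*(1/(z+1) - 1/z))" using z by (simp add: field_simps)
    finally show "0 \<le> - ((ln (z+1) - ln z) + (z+1/2)*(1/(z+1) - 1/z))" unfolding L_def by simp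
  qed
  thus ?thesis by simp
qed




definition FF :: "real \<Rightarrow> real" where
  "FF x = ln (Gamma x) - (x - 1/2) * ln x + x"

lemma Gamma_real_plus1: "(x::real) > 0 \<Longrightarrow> Gamma (x+1) = x * Gamma x"
  by (rule Gamma_plus1) (auto simp: nonpos_Ints_def)

lemma FF_step: "(x::real) > 0 \<Longrightarrow> FF x - FF (x+1) = hh x"
proof -
  assume x: "x > 0"
  have "Gamma x > 0" using x by simp
  hence nz: "Gamma x \<noteq> 0" by linarith
  have "ln (Gamma (x+1)) = ln x + ln (Gamma x)"
    using x \<open>Gamma x > 0\<close> nz by (simp add: Gamma_real_plus1 ln_mult)
  thus ?thesis unfolding FF_def hh_def by (simp add: algebra_simps)
qed

lemma FF_step': "(x::real) > 0 \<Longrightarrow> FF (x + real n) - FF (x + real (Suc n)) = hh (x + real n)"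
proof -
  assume x: "x > 0"
  have "FF (x + real n) - FF ((x + real n) + 1) = hh (x + real n)" by (rule FF_step) (use x in auto)
  moreover have "x + real (Suc n) = (x + real n) + 1" by simp
  ultimately show ?thesis by metis
qed

lemma hh_upper': "(x::real) > 0 \<Longrightarrow> hh (x + real n) \<le> 1/(4*(x + real n)) - 1/(4*(x + real (Suc n)))"
proof -
  assume x: "x > 0"
  have "hh (x + real n) \<le> 1/(4*(x + real n)) - 1/(4*((x + real n) + 1))" by (rule hh_upper) (use x in auto)
  moreover have "x + real (Suc n) = (x + real n) + 1" by simp
  ultimately show ?thesis by metis
qed

lemma FF_dec_n: "(x::real) > 0 \<Longrightarrow> FF (x + real n) \<le> FF x"
proof (induction n)
  case (Suc n)
  have "FF (x + real n) - FF (x + real (Suc n)) = hh (x + real n)"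
    using Suc.prems by (rule FF_step')
  moreover have "hh (x + real n) \<ge> 0" using Suc.prems by (intro hh_nonneg) auto
  ultimately show ?case using Suc by linarith
qed simp

lemma FF_bound_n: "(x::real) > 0 \<Longrightarrow> FF x - FF (x + real n) \<le> 1/(4*x) - 1/(4*(x + real n))"
proof (induction n)
  case (Suc n)
  have "FF (x + real n) - FF (x + real (Suc n)) = hh (x + real n)"
    using Suc.prems by (rule FF_step')
  moreover have "hh (x + real n) \<le> 1/(4*(x + real n)) - 1/(4*(x + real (Suc n)))"
    using Suc.prems by (rule hh_upper')
  ultimately show ?case using Suc by linarith
qed simp

lemma FF_sum_n: "(x::real) > 0 \<Longrightarrow> FF x - FF (x + real n) = (\<Sum>k<n. hh (x + real k))"
proof (induction n)
  case (Suc n)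
  have "FF (x + real n) - FF (x + real (Suc n)) = hh (x + real n)"
    using Suc.prems by (rule FF_step')
  thus ?case using Suc by simp
qed simp

lemma FF_conv: "(x::real) > 0 \<Longrightarrow> \<exists>l. (\<lambda>n. FF (x + real n)) \<longlonglongrightarrow> l"
proof -
  assume x: "x > 0"
  have "decseq (\<lambda>n. FF (x + real n))"
  proof (rule decseq_SucI)
    fix n
    have "FF (x + real n) - FF (x + real (Suc n)) = hh (x + real n)"
      using x by (rule FF_step')
    moreover have "hh (x + real n) \<ge> 0" using x by (intro hh_nonneg) auto
    ultimately show "FF (x + real (Suc n)) \<le> FF (x + real n)" by linarith
  qed
  moreover have "\<forall>i. FF x - 1/(4*x) \<le> FF (x + real i)"
  proof
    fix i
    have "FF x - FF (x + real i) \<le> 1/(4*x) - 1/(4*(x + real i))" using FF_bound_n[OF x] .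
    moreover have "1/(4*(x + real i)) \<ge> 0" using x by simp
    ultimately show "FF x - 1/(4*x) \<le> FF (x + real i)" by linarith
  qed
  ultimately show ?thesis using decseq_convergent by blast
qed

lemma Gamma_series_ratio:
  assumes x: "(x::real) > 0"
  shows "(\<lambda>n. ln (Gamma (real n + 1)) + x * ln (real n) - ln (Gamma (x + real n + 1))) \<longlonglongrightarrow> 0"
proof -
  have xn: "x \<notin> \<int>\<^sub>\<le>\<^sub>0" using x by (auto simp: nonpos_Ints_def)
  have gp: "Gamma x > 0" using x by simp
  hence nz: "Gamma x \<noteq> 0" by linarith
  have lim: "(\<lambda>n. Gamma_series x n / Gamma x) \<longlonglongrightarrow> Gamma x / Gamma x"
    by (intro tendsto_intros) (use nz in auto)
  hence "(\<lambda>n. ln (Gamma_series x n / Gamma x)) \<longlonglongrightarrow> ln (Gamma x / Gamma x)"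
    by (intro tendsto_ln) (use nz in auto)
  hence l2: "(\<lambda>n. ln (Gamma_series x n / Gamma x)) \<longlonglongrightarrow> 0" using nz by simp
  have ev: "eventually (\<lambda>n. ln (Gamma_series x n / Gamma x) =
      ln (Gamma (real n + 1)) + x * ln (real n) - ln (Gamma (x + real n + 1))) sequentially"
    using eventually_gt_at_top[of "0::nat"]
  proof eventually_elim
    case (elim n)
    have p: "pochhammer x (n+1) = Gamma (x + real (n+1)) / Gamma x"
      using pochhammer_Gamma[OF xn] by simp
    have f: "fact n = Gamma (real n + 1)" using Gamma_fact[where 'a=real, of n] by (simp add: add.commute)
    have g1: "Gamma (x + real n + 1) > 0" "Gamma (real n + 1) > 0" "Gamma x > 0" using x by auto
    have g2: "Gamma (real n + 1) \<noteq> 0" "Gamma (x + real n + 1) \<noteq> 0" using g1 by linarith+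
    have "Gamma_series x n / Gamma x = Gamma (real n + 1) * exp (x * ln (real n)) / Gamma (x + real n + 1)"
      unfolding Gamma_series_def p f using g1 by (simp add: field_simps add_ac)
    also have "ln \<dots> = ln (Gamma (real n + 1)) + x * ln (real n) - ln (Gamma (x + real n + 1))"
      using g1 g2 by (simp add: ln_mult ln_div)
    finally show ?case .
  qed
  show ?thesis using tendsto_cong[OF ev] l2 by simp
qed

lemma FF_lim_same:
  assumes x: "(x::real) > 0"
  shows "(\<lambda>n. FF (x + real n + 1) - FF (real n + 1)) \<longlonglongrightarrow> 0"
proof -
  have a: "(\<lambda>n::nat. x * ln (real n) - (x + real n + 1/2) * ln (x + real n + 1) + (real n + 1/2) * ln (real n + 1) + x) \<longlonglongrightarrow> 0"
    using x by real_asymp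
  have "(\<lambda>n. (x * ln (real n) - (x + real n + 1/2) * ln (x + real n + 1) + (real n + 1/2) * ln (real n + 1) + x)
     - (ln (Gamma (real n + 1)) + x * ln (real n) - ln (Gamma (x + real n + 1)))) \<longlonglongrightarrow> 0 - 0"
    by (intro tendsto_diff a Gamma_series_ratio x)
  moreover have "(\<lambda>n. (x * ln (real n) - (x + real n + 1/2) * ln (x + real n + 1) + (real n + 1/2) * ln (real n + 1) + x)
     - (ln (Gamma (real n + 1)) + x * ln (real n) - ln (Gamma (x + real n + 1))))
     = (\<lambda>n. FF (x + real n + 1) - FF (real n + 1))"
    by (rule ext) (simp add: FF_def algebra_simps)
  ultimately show ?thesis by simp
qed




lemma Gamma_dup_real:
  assumes y: "(y::real) > 0"
  shows "Gamma y * Gamma (y + 1/2) = exp ((1 - 2*y) * ln 2) * sqrt pi * Gamma (2*y)"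
proof -
  have r1: "y \<notin> \<int>\<^sub>\<le>\<^sub>0" "y + 1/2 \<notin> \<int>\<^sub>\<le>\<^sub>0" using y by (auto simp: nonpos_Ints_def)
  have "complex_of_real y \<notin> \<int>\<^sub>\<le>\<^sub>0" "complex_of_real (y + 1/2) \<notin> \<int>\<^sub>\<le>\<^sub>0"
    using r1 of_real_in_nonpos_Ints_iff by blast+
  moreover have "complex_of_real y + 1/2 = complex_of_real (y + 1/2)" by simp
  ultimately have a: "complex_of_real y \<notin> \<int>\<^sub>\<le>\<^sub>0" "complex_of_real y + 1/2 \<notin> \<int>\<^sub>\<le>\<^sub>0" by metis+
  have eq: "Gamma (complex_of_real y) * Gamma (complex_of_real y + 1/2) =
      exp ((1 - 2 * complex_of_real y) * of_real (ln 2)) * of_real (sqrt pi) * Gamma (2 * complex_of_real y)"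
    by (rule Gamma_legendre_duplication[OF a])
  have e1: "complex_of_real y + 1/2 = complex_of_real (y + 1/2)" by simp
  have e2: "2 * complex_of_real y = complex_of_real (2*y)" by simp
  have e3: "(1 - complex_of_real (2*y)) * of_real (ln 2) = complex_of_real ((1 - 2*y) * ln 2)" by simp
  have "complex_of_real (Gamma y * Gamma (y + 1/2)) = complex_of_real (exp ((1 - 2*y) * ln 2) * sqrt pi * Gamma (2*y))"
    using eq unfolding e1 e2 e3 Gamma_complex_of_real exp_of_real of_real_mult[symmetric] .
  thus ?thesis using of_real_eq_iff by blast
qed

lemma FF_dup:
  assumes y: "(y::real) > 0"
  shows "FF y + FF (y + 1/2) - FF (2*y) = ln (2*pi)/2 + (1/2 + y * ln y - y * ln (y + 1/2))"
proof -
  have g: "Gamma y > 0" "Gamma (y+1/2) > 0" "Gamma (2*y) > 0" using y by auto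
  have "ln (Gamma y * Gamma (y + 1/2)) = ln (exp ((1 - 2*y) * ln 2) * sqrt pi * Gamma (2*y))"
    using Gamma_dup_real[OF y] by simp
  hence "ln (Gamma y) + ln (Gamma (y + 1/2)) = (1 - 2*y) * ln 2 + ln pi / 2 + ln (Gamma (2*y))"
    using g by (simp add: ln_mult ln_sqrt)
  moreover have "ln (2*y) = ln 2 + ln y" "ln (2*pi) = ln 2 + ln pi" using y by (simp_all add: ln_mult)
  ultimately show ?thesis unfolding FF_def by (simp add: algebra_simps add_divide_distrib)
qed

lemma FF_lim: assumes x: "(x::real) > 0" shows "(\<lambda>n. FF (x + real n)) \<longlonglongrightarrow> ln (2*pi)/2"
proof -
  obtain l where l: "(\<lambda>n. FF (1 + real n)) \<longlonglongrightarrow> l" using FF_conv[of 1] by auto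
  have gen: "(\<lambda>n. FF (z + real n)) \<longlonglongrightarrow> l" if z: "z > 0" for z :: real
  proof -
    have l1: "(\<lambda>n. FF (real n + 1)) \<longlonglongrightarrow> l" using l by (simp add: add.commute)
    have "(\<lambda>n. (FF (z + real n + 1) - FF (real n + 1)) + FF (real n + 1)) \<longlonglongrightarrow> 0 + l"
      by (intro tendsto_add FF_lim_same z l1)
    hence "(\<lambda>n. FF (z + real (Suc n))) \<longlonglongrightarrow> l" by (simp add: add_ac)
    thus ?thesis by (rule LIMSEQ_imp_Suc)
  qed
  have s1: "(\<lambda>n. FF (real n + 1)) \<longlonglongrightarrow> l" using l by (simp add: add.commute)
  have s2: "(\<lambda>n. FF (real n + 1 + 1/2)) \<longlonglongrightarrow> l"
    using gen[of "3/2"] by (simp add: add_ac)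
  have "(\<lambda>m. FF (2 + real m)) \<longlonglongrightarrow> l" using gen[of 2] by simp
  hence "((\<lambda>m. FF (2 + real m)) \<circ> (\<lambda>n. 2*n)) \<longlonglongrightarrow> l"
    by (rule LIMSEQ_subseq_LIMSEQ) (auto simp: strict_mono_def)
  hence s3: "(\<lambda>n. FF (2 * (real n + 1))) \<longlonglongrightarrow> l" by (simp add: o_def algebra_simps)
  have "(\<lambda>n. FF (real n + 1) + FF (real n + 1 + 1/2) - FF (2 * (real n + 1))) \<longlonglongrightarrow> l + l - l"
    by (intro tendsto_intros s1 s2 s3)
  moreover have "(\<lambda>n. FF (real n + 1) + FF (real n + 1 + 1/2) - FF (2 * (real n + 1))) =
     (\<lambda>n::nat. ln (2*pi)/2 + (1/2 + (real n + 1) * ln (real n + 1) - (real n + 1) * ln (real n + 1 + 1/2)))"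
    by (rule ext, rule FF_dup) simp
  moreover have "(\<lambda>n::nat. ln (2*pi)/2 + (1/2 + (real n + 1) * ln (real n + 1) - (real n + 1) * ln (real n + 1 + 1/2)))
      \<longlonglongrightarrow> ln (2*pi)/2 + 0"
    by (intro tendsto_intros) real_asymp
  ultimately have le: "l = ln (2*pi)/2" using LIMSEQ_unique by fastforce
  show ?thesis using gen[OF x] unfolding le .
qed

lemma FF_ge: "(x::real) > 0 \<Longrightarrow> ln (2*pi)/2 \<le> FF x"
  using LIMSEQ_le_const2[OF FF_lim] FF_dec_n by blast

lemma FF_mono: assumes x: "(x::real) > 0" and xy: "x \<le> y" shows "FF y \<le> FF x"
proof -
  have y: "y > 0" using x xy by simp
  have "FF y - ln (2*pi)/2 \<le> FF x - ln (2*pi)/2"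
  proof (rule LIMSEQ_le)
    show "(\<lambda>n. FF y - FF (y + real n)) \<longlonglongrightarrow> FF y - ln (2*pi)/2" by (intro tendsto_intros FF_lim y)
    show "(\<lambda>n. FF x - FF (x + real n)) \<longlonglongrightarrow> FF x - ln (2*pi)/2" by (intro tendsto_intros FF_lim x)
    show "\<exists>N. \<forall>n\<ge>N. FF y - FF (y + real n) \<le> FF x - FF (x + real n)"
    proof (intro exI allI impI)
      fix n
      show "FF y - FF (y + real n) \<le> FF x - FF (x + real n)"
        unfolding FF_sum_n[OF x] FF_sum_n[OF y]
        by (intro sum_mono hh_mono) (use x xy in auto)
    qed
  qed
  thus ?thesis by simp
qed

lemma FF_1: "FF 1 = 1" by (simp add: FF_def)




lemma prod_pos_count:
  "(\<Prod>t<length xs. (\<theta> (xs ! t) :: real)) = (\<Prod>j\<in>set xs. \<theta> j ^ count_list xs j)"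
proof (induction xs rule: rev_induct)
  case Nil thus ?case by simp
next
  case (snoc a xs)
  have "(\<Prod>t<length (xs @ [a]). \<theta> ((xs @ [a]) ! t)) = (\<Prod>t<length xs. \<theta> (xs ! t)) * \<theta> a"
    by (simp add: nth_append)
  also have "\<dots> = (\<Prod>j\<in>set xs. \<theta> j ^ count_list xs j) * \<theta> a" using snoc by simp
  also have "\<dots> = (\<Prod>j\<in>set (xs @ [a]). \<theta> j ^ count_list (xs @ [a]) j)"
  proof (cases "a \<in> set xs")
    case True
    have "(\<Prod>j\<in>set (xs @ [a]). \<theta> j ^ count_list (xs @ [a]) j) =
          (\<Prod>j\<in>set xs. \<theta> j ^ count_list xs j * (if j = a then \<theta> a else 1))"
      using True by (intro prod.cong) (auto simp: insert_absorb)
    also have "\<dots> = (\<Prod>j\<in>set xs. \<theta> j ^ count_list xs j) * (\<Prod>j\<in>set xs. (if j = a then \<theta> a else 1))"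
      by (rule prod.distrib)
    also have "(\<Prod>j\<in>set xs. (if j = a then \<theta> a else 1)) = \<theta> a"
      using True by (simp add: prod.delta)
    finally show ?thesis by simp
  next
    case False
    have "(\<Prod>j\<in>set (xs @ [a]). \<theta> j ^ count_list (xs @ [a]) j) =
          \<theta> a * (\<Prod>j\<in>set xs. \<theta> j ^ count_list (xs @ [a]) j)"
      using False by simp
    also have "(\<Prod>j\<in>set xs. \<theta> j ^ count_list (xs @ [a]) j) = (\<Prod>j\<in>set xs. \<theta> j ^ count_list xs j)"
      using False by (intro prod.cong) auto
    finally show ?thesis by (simp add: mult.commute)
  qed
  finally show ?case .
qed

lemma S_prob_snoc:
  "S_prob \<beta> w (xs @ [a]) = S_prob \<beta> w xs *
     (if count_list xs a > 0 then real (count_list xs a) / (real (length xs) + \<beta>)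
      else \<beta> * w (length xs) a / (real (length xs) + \<beta>))"
proof -
  have "S_prob \<beta> w (xs @ [a]) = (\<Prod>t<length xs. S_cond \<beta> w (xs @ [a]) t ((xs @ [a]) ! t)) *
          S_cond \<beta> w (xs @ [a]) (length xs) a"
    unfolding S_prob_def by (simp add: nth_append)
  also have "(\<Prod>t<length xs. S_cond \<beta> w (xs @ [a]) t ((xs @ [a]) ! t)) = S_prob \<beta> w xs"
    unfolding S_prob_def by (intro prod.cong) (auto simp: S_cond_def nth_append)
  finally show ?thesis by (simp add: S_cond_def cnt_def)
qed

lemma CL_alt: "CL w xs = (\<Sum>t<length xs. if xs ! t \<notin> set (take t xs) then ln (1 / w t (xs ! t)) else 0)"
proof -
  have "{t. t < length xs \<and> xs ! t \<notin> set (take t xs)} = {t\<in>{..<length xs}. xs ! t \<notin> set (take t xs)}" by auto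
  show ?thesis unfolding CL_def \<open>{t. _} = _\<close> by (rule sum.inter_filter) simp
qed

lemma CL_snoc: "CL w (xs @ [a]) = CL w xs + (if a \<notin> set xs then ln (1 / w (length xs) a) else 0)"
proof -
  have "CL w (xs @ [a]) = (\<Sum>t<length xs. if (xs@[a]) ! t \<notin> set (take t (xs@[a])) then ln (1 / w t ((xs@[a]) ! t)) else 0)
     + (if a \<notin> set xs then ln (1 / w (length xs) a) else 0)"
    unfolding CL_alt by (simp add: nth_append)
  also have "(\<Sum>t<length xs. if (xs@[a]) ! t \<notin> set (take t (xs@[a])) then ln (1 / w t ((xs@[a]) ! t)) else 0) = CL w xs"
    unfolding CL_alt by (intro sum.cong) (auto simp: nth_append)
  finally show ?thesis .
qed

lemma key:
  assumes b: "\<beta> > 0"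
    and wpos: "\<forall>t<length xs. xs ! t \<notin> set (take t xs) \<longrightarrow> w t (xs ! t) > 0"
  shows "S_prob \<beta> w xs > 0 \<and>
    ln (S_prob \<beta> w xs) = real (card (set xs)) * ln \<beta> - CL w xs
      + (\<Sum>j\<in>set xs. ln (fact (count_list xs j - 1))) - (\<Sum>t<length xs. ln (real t + \<beta>))"
  using wpos
proof (induction xs rule: rev_induct)
  case Nil thus ?case by (simp add: S_prob_def CL_def)
next
  case (snoc a xs)
  have wp: "\<forall>t<length xs. xs ! t \<notin> set (take t xs) \<longrightarrow> w t (xs ! t) > 0"
  proof (intro allI impI)
    fix t assume t: "t < length xs" "xs ! t \<notin> set (take t xs)"
    thus "w t (xs ! t) > 0" using snoc.prems[rule_format, of t] by (simp add: nth_append)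
  qed
  note IH = snoc.IH[OF wp]
  define n where "n = length xs"
  define c where "c = count_list xs a"
  have nb: "real n + \<beta> > 0" using b by simp
  show ?case
  proof (cases "a \<in> set xs")
    case True
    hence c0: "c > 0" unfolding c_def by (metis count_list_0_iff gr0I)
    have S: "S_prob \<beta> w (xs @ [a]) = S_prob \<beta> w xs * (real c / (real n + \<beta>))"
      using S_prob_snoc[of \<beta> w xs a] c0 unfolding c_def n_def by simp
    have pos: "S_prob \<beta> w (xs @ [a]) > 0" unfolding S using IH c0 nb by simp
    have lnS: "ln (S_prob \<beta> w (xs @ [a])) = ln (S_prob \<beta> w xs) + ln (real c) - ln (real n + \<beta>)"
      unfolding S using IH c0 nb by (simp add: ln_mult ln_div)
    have CLe: "CL w (xs @ [a]) = CL w xs" using CL_snoc[of w xs a] True by simp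
    have sete: "set (xs @ [a]) = set xs" using True by auto
    have fs: "(\<Sum>j\<in>set xs. ln (fact (count_list (xs @ [a]) j - 1) :: real)) =
        (\<Sum>j\<in>set xs. ln (fact (count_list xs j - 1))) + ln (real c)"
    proof -
      have "(\<Sum>j\<in>set xs. ln (fact (count_list (xs @ [a]) j - 1) :: real)) =
          (\<Sum>j\<in>set xs. ln (fact (count_list xs j - 1)) + (if j = a then ln (real c) else 0))"
      proof (intro sum.cong refl)
        fix j assume j: "j \<in> set xs"
        show "ln (fact (count_list (xs @ [a]) j - 1) :: real) = ln (fact (count_list xs j - 1)) + (if j = a then ln (real c) else 0)"
        proof (cases "j = a")
          case True
          have e1: "count_list (xs @ [a]) j - 1 = c" using True unfolding c_def by simp
          have e2: "count_list xs j - 1 = c - 1" using True c_def by simp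
          have "(fact c :: real) = real c * fact (c - 1)" using c0 by (rule fact_reduce)
          hence "ln (fact c :: real) = ln (real c) + ln (fact (c - 1))"
            using c0 by (simp add: ln_mult)
          thus ?thesis unfolding e1 e2 using True by simp
        next
          case False thus ?thesis by simp
        qed
      qed
      also have "\<dots> = (\<Sum>j\<in>set xs. ln (fact (count_list xs j - 1))) + ln (real c)"
        using True by (simp add: sum.distrib)
      finally show ?thesis .
    qed
    show ?thesis using pos lnS IH CLe fs unfolding sete by (simp add: n_def)
  next
    case False
    hence c0: "c = 0" unfolding c_def by (simp add: count_list_0_iff)
    have wa: "w n a > 0" using snoc.prems[rule_format, of n] False unfolding n_def by simp
    have S: "S_prob \<beta> w (xs @ [a]) = S_prob \<beta> w xs * (\<beta> * w n a / (real n + \<beta>))"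
      using S_prob_snoc[of \<beta> w xs a] c0 unfolding c_def n_def by simp
    have pos: "S_prob \<beta> w (xs @ [a]) > 0" unfolding S using IH wa b nb by simp
    have lnS: "ln (S_prob \<beta> w (xs @ [a])) = ln (S_prob \<beta> w xs) + ln \<beta> + ln (w n a) - ln (real n + \<beta>)"
      unfolding S using IH wa b nb by (simp add: ln_mult ln_div)
    have CLe: "CL w (xs @ [a]) = CL w xs - ln (w n a)" using CL_snoc[of w xs a] False wa
      unfolding n_def by (simp add: ln_div)
    have sete: "set (xs @ [a]) = insert a (set xs)" by auto
    have card: "card (set (xs @ [a])) = Suc (card (set xs))" using False unfolding sete by simp
    have fs: "(\<Sum>j\<in>set (xs @ [a]). ln (fact (count_list (xs @ [a]) j - 1) :: real)) =
        (\<Sum>j\<in>set xs. ln (fact (count_list xs j - 1)))"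
    proof -
      have "(\<Sum>j\<in>set (xs @ [a]). ln (fact (count_list (xs @ [a]) j - 1) :: real)) =
          ln (fact (count_list (xs @ [a]) a - 1)) + (\<Sum>j\<in>set xs. ln (fact (count_list (xs @ [a]) j - 1) :: real))"
        unfolding sete using False by simp
      also have "(\<Sum>j\<in>set xs. ln (fact (count_list (xs @ [a]) j - 1) :: real)) = (\<Sum>j\<in>set xs. ln (fact (count_list xs j - 1)))"
        using False by (intro sum.cong) auto
      also have "count_list (xs @ [a]) a - 1 = 0" using c0 c_def by simp
      finally show ?thesis by simp
    qed
    show ?thesis using pos lnS IH CLe fs card by (simp add: n_def algebra_simps)
  qed
qed

lemma sum_ln_poch: "(\<beta>::real) > 0 \<Longrightarrow> (\<Sum>t<n. ln (real t + \<beta>)) = ln (Gamma (real n + \<beta>)) - ln (Gamma \<beta>)"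
proof (induction n)
  case (Suc n)
  have g: "Gamma (real n + \<beta>) > 0" using Suc.prems by simp
  hence g2: "Gamma (real n + \<beta>) \<noteq> 0" by linarith
  have "Gamma (real (Suc n) + \<beta>) = (real n + \<beta>) * Gamma (real n + \<beta>)"
    using Gamma_real_plus1[of "real n + \<beta>"] Suc.prems by (simp add: add_ac)
  hence "ln (Gamma (real (Suc n) + \<beta>)) = ln (real n + \<beta>) + ln (Gamma (real n + \<beta>))"
    using g g2 Suc.prems by (simp add: ln_mult)
  thus ?case using Suc by simp
qed simp




lemma gibbs_term:
  fixes c n t :: real assumes "c > 0" "n > 0" "t > 0"
  shows "c * (ln t - ln (c / n)) \<le> n * t - c"
proof -
  have "ln t - ln (c/n) = ln (t * n / c)" using assms by (simp add: ln_div ln_mult)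
  also have "\<dots> \<le> t * n / c - 1" using assms by (intro ln_le_minus_one) simp
  finally have "c * (ln t - ln (c / n)) \<le> c * (t * n / c - 1)" using assms by (intro mult_left_mono) auto
  also have "\<dots> = n * t - c" using assms by (simp add: field_simps)
  finally show ?thesis .
qed

lemma max_lik_eq:
  fixes xs :: "'a::finite list"
  assumes n1: "length xs \<ge> 1"
  shows "max_lik xs = (\<Prod>j\<in>set xs. (real (count_list xs j) / real (length xs)) ^ count_list xs j)"
proof -
  define n where "n = length xs"
  have n0: "real n > 0" using n1 n_def by (simp add: Suc_le_eq)
  define R where "R = (\<Prod>j\<in>set xs. (real (count_list xs j) / real n) ^ count_list xs j)"
  have cpos: "count_list xs j > 0" if "j \<in> set xs" for j
    using that by (metis count_list_0_iff gr0I)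
  have sumc: "(\<Sum>j\<in>set xs. real (count_list xs j)) = real n"
    using sum_count_set[of xs "set xs"] unfolding n_def by (simp flip: of_nat_sum)
  have Rpos: "R > 0" unfolding R_def using cpos n0 by (intro prod_pos) simp
  define th where "th = (\<lambda>i. real (count_list xs i) / real n)"
  have th_in: "th \<in> prob_vecs"
  proof -
    have "(\<Sum>i\<in>UNIV. th i) = (\<Sum>i\<in>UNIV. real (count_list xs i)) / real n"
      unfolding th_def by (simp add: sum_divide_distrib)
    also have "(\<Sum>i\<in>UNIV. real (count_list xs i)) = real n"
      using sum_count_set[of xs UNIV] unfolding n_def by (simp flip: of_nat_sum)
    finally show ?thesis unfolding prob_vecs_def th_def using n0 by simp
  qed
  have Pth: "(\<Prod>t<length xs. th (xs ! t)) = R"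
    unfolding R_def using prod_pos_count[of th xs] by (simp add: th_def)
  have bound: "(\<Prod>t<length xs. \<theta> (xs ! t)) \<le> R" if th: "\<theta> \<in> prob_vecs" for \<theta>
  proof -
    have nn: "\<And>i. \<theta> i \<ge> 0" and s1: "(\<Sum>i\<in>UNIV. \<theta> i) = 1" using th unfolding prob_vecs_def by auto
    have P: "(\<Prod>t<length xs. \<theta> (xs ! t)) = (\<Prod>j\<in>set xs. \<theta> j ^ count_list xs j)" by (rule prod_pos_count)
    show ?thesis
    proof (cases "\<exists>j\<in>set xs. \<theta> j = 0")
      case True
      then obtain j where "j \<in> set xs" "\<theta> j = 0" by auto
      hence "(\<Prod>j\<in>set xs. \<theta> j ^ count_list xs j) = 0" using cpos[of j] by (intro prod_zero) auto
      thus ?thesis unfolding P using Rpos by linarith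
    next
      case False
      hence tp: "\<And>j. j \<in> set xs \<Longrightarrow> \<theta> j > 0" using nn by (metis less_eq_real_def)
      have Lp: "(\<Prod>j\<in>set xs. \<theta> j ^ count_list xs j) > 0" using tp by (intro prod_pos zero_less_power) auto
      have lnL: "ln (\<Prod>j\<in>set xs. \<theta> j ^ count_list xs j) = (\<Sum>j\<in>set xs. real (count_list xs j) * ln (\<theta> j))"
        using tp by (subst ln_prod) (auto simp: ln_realpow dest: tp)
      have lnR: "ln R = (\<Sum>j\<in>set xs. real (count_list xs j) * ln (real (count_list xs j) / real n))"
        unfolding R_def using cpos n0 by (subst ln_prod) (auto simp: ln_realpow)
      have "(\<Sum>j\<in>set xs. real (count_list xs j) * ln (\<theta> j)) - (\<Sum>j\<in>set xs. real (count_list xs j) * ln (real (count_list xs j) / real n))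
          = (\<Sum>j\<in>set xs. real (count_list xs j) * (ln (\<theta> j) - ln (real (count_list xs j) / real n)))"
        by (simp add: sum_subtractf algebra_simps)
      also have "\<dots> \<le> (\<Sum>j\<in>set xs. real n * \<theta> j - real (count_list xs j))"
        using cpos tp n0 by (intro sum_mono gibbs_term) auto
      also have "\<dots> = real n * (\<Sum>j\<in>set xs. \<theta> j) - real n"
        using sumc by (simp add: sum_subtractf sum_distrib_left)
      also have "(\<Sum>j\<in>set xs. \<theta> j) \<le> (\<Sum>i\<in>UNIV. \<theta> i)" using nn by (intro sum_mono2) auto
      hence "real n * (\<Sum>j\<in>set xs. \<theta> j) - real n \<le> 0" using s1 n0
        by (simp add: mult_le_cancel_left1)
      finally have "ln (\<Prod>j\<in>set xs. \<theta> j ^ count_list xs j) \<le> ln R" using lnL lnR by simp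
      hence "(\<Prod>j\<in>set xs. \<theta> j ^ count_list xs j) \<le> R" using Lp Rpos by simp
      thus ?thesis using P by simp
    qed
  qed
  have "max_lik xs = R"
    unfolding max_lik_def
  proof (rule cSup_eq_maximum)
    show "R \<in> (\<lambda>\<theta>. \<Prod>t<length xs. \<theta> (xs ! t)) ` prob_vecs" using th_in Pth by force
    show "\<And>x. x \<in> (\<lambda>\<theta>. \<Prod>t<length xs. \<theta> (xs ! t)) ` prob_vecs \<Longrightarrow> x \<le> R" using bound by blast
  qed
  thus ?thesis unfolding R_def n_def .
qed




lemma lin_aux: "(R::real) = U + a - b + S + (f1 - f2) \<Longrightarrow> -Q \<le> S \<Longrightarrow> L \<le> f1 \<Longrightarrow> f2 \<le> 1 \<Longrightarrow> b = 1 - L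
   \<Longrightarrow> U + a - (Q + 2*b) \<le> R"
  by linarith

theorem proposition1:
  fixes \<beta> :: real and xs :: "'a::finite list" and w :: "nat \<Rightarrow> 'a \<Rightarrow> real"
  assumes beta_pos: "\<beta> > 0"
    and n_pos: "length xs \<ge> 1"
    and weights: "valid_weights w (length xs) xs"
  shows
   "redundancy (S_prob \<beta> w) xs =
      CL w xs - real (card (set xs)) * ln \<beta>
      + (\<Sum>j\<in>set xs. ln (real (count_list xs j) ^ count_list xs j / Gamma (real (count_list xs j))))
      + ln (Gamma (real (length xs) + \<beta>) / (real (length xs) ^ length xs * Gamma \<beta>))
    \<and> redundancy (S_prob \<beta> w) xs \<le>
      CL w xs - real (card (set xs)) * ln \<beta>
      + (\<Sum>j\<in>set xs. (1/2) * ln (real (count_list xs j) / (2 * pi)))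
      + real (length xs) * ln (1 + \<beta> / real (length xs))
      + (\<beta> - 1/2) * ln (real (length xs) / \<beta> + 1)
      + (1 - ln (sqrt (2 * pi)))
    \<and> (\<beta> \<ge> 1 \<longrightarrow>
      redundancy (S_prob \<beta> w) xs \<ge>
      CL w xs - real (card (set xs)) * ln \<beta>
      + (\<Sum>j\<in>set xs. (1/2) * ln (real (count_list xs j) / (2 * pi)))
      + real (length xs) * ln (1 + \<beta> / real (length xs))
      + (\<beta> - 1/2) * ln (real (length xs) / \<beta> + 1)
      + (1 - ln (sqrt (2 * pi)))
      - (1 - ln (sqrt (2 * pi))) * (real (card (set xs)) + 2))"
proof -
  define n where "n = length xs"
  define L where "L = ln (2*pi)/2"
  have n0: "real n > 0" using n_pos n_def by (simp add: Suc_le_eq)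
  have cpos: "count_list xs j > 0" if "j \<in> set xs" for j
    using that by (metis count_list_0_iff gr0I)
  have sumc: "(\<Sum>j\<in>set xs. real (count_list xs j)) = real n"
    using sum_count_set[of xs "set xs"] unfolding n_def by (simp flip: of_nat_sum)
  have wpos: "\<forall>t<length xs. xs ! t \<notin> set (take t xs) \<longrightarrow> w t (xs ! t) > 0"
    using weights unfolding valid_weights_def by auto
  note K = key[of "\<beta>" xs w, OF beta_pos wpos]
  have Spos: "S_prob \<beta> w xs > 0" using K by simp
  define R where "R = (\<Prod>j\<in>set xs. (real (count_list xs j) / real n) ^ count_list xs j)"
  have MLe: "max_lik xs = R" unfolding R_def n_def by (rule max_lik_eq[OF n_pos])
  have Rpos: "R > 0" unfolding R_def using cpos n0 by (intro prod_pos) simp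
  have lnR: "ln R = (\<Sum>j\<in>set xs. real (count_list xs j) * ln (real (count_list xs j))) - real n * ln (real n)"
  proof -
    have "ln R = (\<Sum>j\<in>set xs. real (count_list xs j) * ln (real (count_list xs j) / real n))"
      unfolding R_def using cpos n0 by (subst ln_prod) (auto simp: ln_realpow)
    also have "\<dots> = (\<Sum>j\<in>set xs. real (count_list xs j) * ln (real (count_list xs j)) - real (count_list xs j) * ln (real n))"
      using cpos n0 by (intro sum.cong refl) (simp add: ln_div algebra_simps)
    also have "\<dots> = (\<Sum>j\<in>set xs. real (count_list xs j) * ln (real (count_list xs j))) - real n * ln (real n)"
      by (simp add: sum_subtractf sum_distrib_right[symmetric] sumc)
    finally show ?thesis .
  qed
  have lnfact: "ln (fact (count_list xs j - 1) :: real) = ln (Gamma (real (count_list xs j)))" if "j \<in> set xs" for j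
  proof -
    have "Gamma (1 + of_nat (count_list xs j - 1) :: real) = fact (count_list xs j - 1)" by (rule Gamma_fact)
    moreover have "1 + real (count_list xs j - 1) = real (count_list xs j)" using cpos[OF that] by simp
    ultimately show ?thesis by simp
  qed
  have lnS: "ln (S_prob \<beta> w xs) = real (card (set xs)) * ln \<beta> - CL w xs
      + (\<Sum>j\<in>set xs. ln (Gamma (real (count_list xs j)))) - (ln (Gamma (real n + \<beta>)) - ln (Gamma \<beta>))"
    using K lnfact sum_ln_poch[OF beta_pos, of n] unfolding n_def by simp
  have red: "redundancy (S_prob \<beta> w) xs = ln R - ln (S_prob \<beta> w xs)"
    unfolding redundancy_def MLe using Rpos Spos by (simp add: ln_div)
  have gpos: "Gamma (real (count_list xs j)) > 0" if "j \<in> set xs" for j using cpos[OF that] by simp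
  have T1: "ln (real (count_list xs j) ^ count_list xs j / Gamma (real (count_list xs j))) =
     real (count_list xs j) * ln (real (count_list xs j)) - ln (Gamma (real (count_list xs j)))" if "j \<in> set xs" for j
    using gpos[OF that] cpos[OF that] less_imp_neq[OF gpos[OF that], symmetric] by (simp add: ln_div ln_realpow)
  have gnb: "Gamma (real n + \<beta>) > 0" "Gamma \<beta> > 0" using n0 beta_pos by auto
  have T2: "ln (Gamma (real n + \<beta>) / (real n ^ n * Gamma \<beta>)) = ln (Gamma (real n + \<beta>)) - real n * ln (real n) - ln (Gamma \<beta>)"
    using gnb n0 less_imp_neq[OF gnb(1), symmetric] less_imp_neq[OF gnb(2), symmetric] by (simp add: ln_div ln_mult ln_realpow)
  have S1: "(\<Sum>j\<in>set xs. ln (real (count_list xs j) ^ count_list xs j / Gamma (real (count_list xs j)))) =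
      (\<Sum>j\<in>set xs. real (count_list xs j) * ln (real (count_list xs j))) - (\<Sum>j\<in>set xs. ln (Gamma (real (count_list xs j))))"
    using T1 by (simp add: sum_subtractf)
  have ident: "redundancy (S_prob \<beta> w) xs =
      CL w xs - real (card (set xs)) * ln \<beta>
      + (\<Sum>j\<in>set xs. ln (real (count_list xs j) ^ count_list xs j / Gamma (real (count_list xs j))))
      + ln (Gamma (real (length xs) + \<beta>) / (real (length xs) ^ length xs * Gamma \<beta>))"
    unfolding red lnR lnS S1 n_def[symmetric] T2 by simp
  have T1': "ln (real (count_list xs j) ^ count_list xs j / Gamma (real (count_list xs j))) =
     (1/2) * ln (real (count_list xs j) / (2 * pi)) + (L - FF (real (count_list xs j))) + real (count_list xs j)"
    if "j \<in> set xs" for j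
  proof -
    have "ln (real (count_list xs j) / (2*pi)) = ln (real (count_list xs j)) - ln (2*pi)"
      using cpos[OF that] by (simp add: ln_div)
    thus ?thesis unfolding T1[OF that] FF_def L_def by (simp add: algebra_simps)
  qed
  have S1': "(\<Sum>j\<in>set xs. ln (real (count_list xs j) ^ count_list xs j / Gamma (real (count_list xs j)))) =
     (\<Sum>j\<in>set xs. (1/2) * ln (real (count_list xs j) / (2 * pi))) + (\<Sum>j\<in>set xs. L - FF (real (count_list xs j))) + real n"
    using T1' sumc by (simp add: sum.distrib)
  have T2': "ln (Gamma (real n + \<beta>) / (real n ^ n * Gamma \<beta>)) =
     real n * ln (1 + \<beta> / real n) + (\<beta> - 1/2) * ln (real n / \<beta> + 1) - real n + (FF (real n + \<beta>) - FF \<beta>)"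
  proof -
    have a: "ln (1 + \<beta> / real n) = ln (real n + \<beta>) - ln (real n)"
    proof -
      have "1 + \<beta> / real n = (real n + \<beta>) / real n" using n0 by (simp add: field_simps)
      thus ?thesis using n0 beta_pos by (simp add: ln_div)
    qed
    have b: "ln (real n / \<beta> + 1) = ln (real n + \<beta>) - ln \<beta>"
    proof -
      have "real n / \<beta> + 1 = (real n + \<beta>) / \<beta>" using beta_pos by (simp add: field_simps)
      thus ?thesis using n0 beta_pos by (simp add: ln_div)
    qed
    show ?thesis unfolding T2 a b FF_def by (simp add: algebra_simps)
  qed
  have sq: "ln (sqrt (2 * pi)) = L" unfolding L_def by (simp add: ln_sqrt)
  have Rform: "redundancy (S_prob \<beta> w) xs =
      CL w xs - real (card (set xs)) * ln \<beta>
      + (\<Sum>j\<in>set xs. (1/2) * ln (real (count_list xs j) / (2 * pi)))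
      + real (length xs) * ln (1 + \<beta> / real (length xs))
      + (\<beta> - 1/2) * ln (real (length xs) / \<beta> + 1)
      + (1 - ln (sqrt (2 * pi))) - (1 - L)
      + (\<Sum>j\<in>set xs. L - FF (real (count_list xs j))) + (FF (real n + \<beta>) - FF \<beta>)"
    unfolding ident S1' n_def[symmetric] T2' sq by simp
  have cL: "0 \<le> 1 - L" using FF_ge[of 1] FF_1 unfolding L_def by simp
  have up1: "(\<Sum>j\<in>set xs. L - FF (real (count_list xs j))) \<le> 0"
    using cpos FF_ge unfolding L_def by (intro sum_nonpos) (simp add: )
  have up2: "FF (real n + \<beta>) \<le> FF \<beta>" using beta_pos n0 by (intro FF_mono) auto
  have upper: "redundancy (S_prob \<beta> w) xs \<le>
      CL w xs - real (card (set xs)) * ln \<beta>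
      + (\<Sum>j\<in>set xs. (1/2) * ln (real (count_list xs j) / (2 * pi)))
      + real (length xs) * ln (1 + \<beta> / real (length xs))
      + (\<beta> - 1/2) * ln (real (length xs) / \<beta> + 1)
      + (1 - ln (sqrt (2 * pi)))"
    using Rform cL up1 up2 by linarith
  have lower: "redundancy (S_prob \<beta> w) xs \<ge>
      CL w xs - real (card (set xs)) * ln \<beta>
      + (\<Sum>j\<in>set xs. (1/2) * ln (real (count_list xs j) / (2 * pi)))
      + real (length xs) * ln (1 + \<beta> / real (length xs))
      + (\<beta> - 1/2) * ln (real (length xs) / \<beta> + 1)
      + (1 - ln (sqrt (2 * pi)))
      - (1 - ln (sqrt (2 * pi))) * (real (card (set xs)) + 2)" if b1: "\<beta> \<ge> 1"
  proof -
    have lo1: "(\<Sum>j\<in>set xs. L - FF (real (count_list xs j))) \<ge> (\<Sum>j\<in>set xs. L - 1)"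
    proof (intro sum_mono)
      fix j assume j: "j \<in> set xs"
      have "FF (real (count_list xs j)) \<le> FF 1" using cpos[OF j] by (intro FF_mono) auto
      thus "L - 1 \<le> L - FF (real (count_list xs j))" using FF_1 by simp
    qed
    have lo1': "(\<Sum>j\<in>set xs. L - 1) = - ((1 - L) * real (card (set xs)))" by (simp add: algebra_simps)
    have lo2: "L \<le> FF (real n + \<beta>)" unfolding L_def using n0 beta_pos by (intro FF_ge) simp
    have lo3: "FF \<beta> \<le> 1" using FF_mono[of 1 \<beta>] b1 FF_1 by simp
    have e: "(1 - ln (sqrt (2 * pi))) * (real (card (set xs)) + 2) = (1 - L) * real (card (set xs)) + 2 * (1 - L)"
      unfolding sq by (simp add: algebra_simps)
    have lo: "(\<Sum>j\<in>set xs. L - FF (real (count_list xs j))) \<ge> - ((1 - L) * real (card (set xs)))"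
      using lo1 lo1' by linarith
    define Q where "Q = (1 - L) * real (card (set xs))"
    show ?thesis unfolding e Q_def[symmetric] by (rule lin_aux[OF Rform lo[folded Q_def] lo2 lo3]) simp
  qed
  show ?thesis using ident upper lower by blast
qed


end
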